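(* Let $(A_n)_{n\ge1}$ be a sequence of nonnegative integer matrices, $A_n$ of size $f(n+1)\times f(n)$, such that each $A_n$ has all column sums equal, and such that the direct limit $G$ of $\mathbb Z^{f(1)}\xrightarrow{A_1}\mathbb Z^{f(2)}\xrightarrow{A_2}\cdots$ (with the induced ordering) is a simple non-cyclic dimension group. Then $G$ is globally irrationally miscible.
   Context: The direct limit is ordered by the union of the images of $\mathbb Z_+^{f(n)}$. A dimension group is simple if it has no nontrivial order ideals. For an order unit $u$, $S(G,u)$ is the set of states (homomorphisms $\sigma:G\to\mathbb R$, $\sigma(G^+)\ge0$, $\sigma(u)=1$); $J(G,u)=\{g:\sigma\mapsto\sigma(g)\text{ constant on }S(G,u)\}$ with $\Phi(g)$ the constant. $(G,u)$ is irrationally miscible if $\Phi(J(G,u))\subseteq\mathbb Q$; $G$ is globally irrationally miscible if this holds for every order unit $u$. *)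

theory Defs
  imports Complex_Main "HOL-Library.Countable_Set"
begin

record 'a pog =
  pcar :: "'a set"
  padd :: "'a \<Rightarrow> 'a \<Rightarrow> 'a"
  pzero :: "'a"
  pneg :: "'a \<Rightarrow> 'a"
  ppos :: "'a set"

definition pog_le :: "'a pog \<Rightarrow> 'a \<Rightarrow> 'a \<Rightarrow> bool" where
  "pog_le G a b \<longleftrightarrow> a \<in> pcar G \<and> b \<in> pcar G \<and> padd G b (pneg G a) \<in> ppos G"

definition pog_zmul :: "'a pog \<Rightarrow> int \<Rightarrow> 'a \<Rightarrow> 'a" where
  "pog_zmul G k g = (if 0 \<le> k then (padd G g ^^ nat k) (pzero G)
                     else pneg G ((padd G g ^^ nat (- k)) (pzero G)))"

definition is_pog :: "'a pog \<Rightarrow> bool" where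
  "is_pog G \<longleftrightarrow>
     (\<forall>a\<in>pcar G. \<forall>b\<in>pcar G. padd G a b \<in> pcar G) \<and>
     pzero G \<in> pcar G \<and> (\<forall>a\<in>pcar G. pneg G a \<in> pcar G) \<and>
     (\<forall>a\<in>pcar G. \<forall>b\<in>pcar G. \<forall>c\<in>pcar G. padd G (padd G a b) c = padd G a (padd G b c)) \<and>
     (\<forall>a\<in>pcar G. \<forall>b\<in>pcar G. padd G a b = padd G b a) \<and>
     (\<forall>a\<in>pcar G. padd G a (pzero G) = a) \<and>
     (\<forall>a\<in>pcar G. padd G a (pneg G a) = pzero G) \<and>
     ppos G \<subseteq> pcar G \<and> pzero G \<in> ppos G \<and>
     (\<forall>a\<in>ppos G. \<forall>b\<in>ppos G. padd G a b \<in> ppos G) \<and>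
     (\<forall>a\<in>ppos G. pneg G a \<in> ppos G \<longrightarrow> a = pzero G)"

text \<open>Dimension group (Effros--Handelman--Shen axiomatic form): countable, directed,
  unperforated partially ordered abelian group with the Riesz interpolation property.\<close>
definition dimension_group :: "'a pog \<Rightarrow> bool" where
  "dimension_group G \<longleftrightarrow> is_pog G \<and> countable (pcar G) \<and>
     (\<forall>g\<in>pcar G. \<exists>a\<in>ppos G. \<exists>b\<in>ppos G. g = padd G a (pneg G b)) \<and>
     (\<forall>g\<in>pcar G. \<forall>n::nat. n \<ge> 1 \<longrightarrow> pog_zmul G (int n) g \<in> ppos G \<longrightarrow> g \<in> ppos G) \<and>
     (\<forall>a1 a2 b1 b2. pog_le G a1 b1 \<and> pog_le G a1 b2 \<and> pog_le G a2 b1 \<and> pog_le G a2 b2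
        \<longrightarrow> (\<exists>c. pog_le G a1 c \<and> pog_le G a2 c \<and> pog_le G c b1 \<and> pog_le G c b2))"

definition order_ideal :: "'a pog \<Rightarrow> 'a set \<Rightarrow> bool" where
  "order_ideal G I \<longleftrightarrow> I \<subseteq> pcar G \<and> pzero G \<in> I \<and>
     (\<forall>a\<in>I. \<forall>b\<in>I. padd G a b \<in> I) \<and> (\<forall>a\<in>I. pneg G a \<in> I) \<and>
     (\<forall>x\<in>I. \<exists>a\<in>I \<inter> ppos G. \<exists>b\<in>I \<inter> ppos G. x = padd G a (pneg G b)) \<and>
     (\<forall>a b. b \<in> I \<and> pog_le G (pzero G) a \<and> pog_le G a b \<longrightarrow> a \<in> I)"

definition simple_pog :: "'a pog \<Rightarrow> bool" where
  "simple_pog G \<longleftrightarrow> (\<forall>I. order_ideal G I \<longrightarrow> I = {pzero G} \<or> I = pcar G)"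

definition cyclic_pog :: "'a pog \<Rightarrow> bool" where
  "cyclic_pog G \<longleftrightarrow> (\<exists>g\<in>pcar G. pcar G = range (\<lambda>k. pog_zmul G k g))"

definition order_unit :: "'a pog \<Rightarrow> 'a \<Rightarrow> bool" where
  "order_unit G u \<longleftrightarrow> u \<in> ppos G \<and> (\<forall>g\<in>pcar G. \<exists>n::nat. pog_le G g (pog_zmul G (int n) u))"

text \<open>States S(G,u); a state is only meaningful on the carrier, so we take them
  as functions that vanish off the carrier (to avoid junk values).\<close>
definition states :: "'a pog \<Rightarrow> 'a \<Rightarrow> ('a \<Rightarrow> real) set" where
  "states G u = {\<sigma>. (\<forall>a\<in>pcar G. \<forall>b\<in>pcar G. \<sigma> (padd G a b) = \<sigma> a + \<sigma> b) \<and>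
                    (\<forall>a\<in>ppos G. \<sigma> a \<ge> 0) \<and> \<sigma> u = 1 \<and> (\<forall>a. a \<notin> pcar G \<longrightarrow> \<sigma> a = 0)}"

definition Jset :: "'a pog \<Rightarrow> 'a \<Rightarrow> 'a set" where
  "Jset G u = {g\<in>pcar G. \<forall>\<sigma>\<in>states G u. \<forall>\<tau>\<in>states G u. \<sigma> g = \<tau> g}"

definition irr_miscible :: "'a pog \<Rightarrow> 'a \<Rightarrow> bool" where
  "irr_miscible G u \<longleftrightarrow> (\<forall>g\<in>Jset G u. \<forall>\<sigma>\<in>states G u. \<sigma> g \<in> \<rat>)"

definition globally_irr_miscible :: "'a pog \<Rightarrow> bool" where
  "globally_irr_miscible G \<longleftrightarrow> (\<forall>u. order_unit G u \<longrightarrow> irr_miscible G u)"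

text \<open>Vectors in Z^k are functions nat => int vanishing from index k on;
  A n i j is the (i,j) entry of the f(n+1) x f(n) matrix A_n.\<close>

definition dl_vec :: "nat \<Rightarrow> (nat \<Rightarrow> int) \<Rightarrow> bool" where
  "dl_vec k v \<longleftrightarrow> (\<forall>i\<ge>k. v i = 0)"

definition dl_step :: "(nat \<Rightarrow> nat) \<Rightarrow> (nat \<Rightarrow> nat \<Rightarrow> nat \<Rightarrow> nat) \<Rightarrow> nat \<Rightarrow> (nat \<Rightarrow> int) \<Rightarrow> (nat \<Rightarrow> int)" where
  "dl_step f A n v = (\<lambda>i. if i < f (Suc n) then (\<Sum>j<f n. int (A n i j) * v j) else 0)"

fun dl_push :: "(nat \<Rightarrow> nat) \<Rightarrow> (nat \<Rightarrow> nat \<Rightarrow> nat \<Rightarrow> nat) \<Rightarrow> nat \<Rightarrow> nat \<Rightarrow> (nat \<Rightarrow> int) \<Rightarrow> (nat \<Rightarrow> int)" where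
  "dl_push f A n 0 v = v"
| "dl_push f A n (Suc k) v = dl_step f A (n + k) (dl_push f A n k v)"

definition dl_rel :: "(nat \<Rightarrow> nat) \<Rightarrow> (nat \<Rightarrow> nat \<Rightarrow> nat \<Rightarrow> nat) \<Rightarrow> ((nat \<times> (nat \<Rightarrow> int)) \<times> (nat \<times> (nat \<Rightarrow> int))) set" where
  "dl_rel f A = {((n, v), (m, w)). dl_vec (f n) v \<and> dl_vec (f m) w \<and>
      (\<exists>k. n \<le> k \<and> m \<le> k \<and> dl_push f A n (k - n) v = dl_push f A m (k - m) w)}"

definition DL :: "(nat \<Rightarrow> nat) \<Rightarrow> (nat \<Rightarrow> nat \<Rightarrow> nat \<Rightarrow> nat) \<Rightarrow> (nat \<times> (nat \<Rightarrow> int)) set pog" where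
  "DL f A = \<lparr>
     pcar = {(n, v). dl_vec (f n) v} // dl_rel f A,
     padd = (\<lambda>x y. dl_rel f A `` {(n, \<lambda>i. v i + w i) | n v w. (n, v) \<in> x \<and> (n, w) \<in> y}),
     pzero = dl_rel f A `` {(0, \<lambda>i. 0)},
     pneg = (\<lambda>x. {(n, \<lambda>i. - v i) | n v. (n, v) \<in> x}),
     ppos = {x \<in> {(n, v). dl_vec (f n) v} // dl_rel f A. \<exists>(n, v)\<in>x. \<forall>i. 0 \<le> v i} \<rparr>"

end

theory Submission
  imports Defs
begin

definition csum :: "(nat \<Rightarrow> nat) \<Rightarrow> (nat \<Rightarrow> nat \<Rightarrow> nat \<Rightarrow> nat) \<Rightarrow> nat \<Rightarrow> nat" where
  "csum f A m = (\<Sum>i<f (Suc m). A m i 0)"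

definition Pr :: "(nat \<Rightarrow> nat) \<Rightarrow> (nat \<Rightarrow> nat \<Rightarrow> nat \<Rightarrow> nat) \<Rightarrow> nat \<Rightarrow> nat \<Rightarrow> nat" where
  "Pr f A n k = (\<Prod>i<k. csum f A (n + i))"

definition Ssum :: "nat \<Rightarrow> (nat \<Rightarrow> int) \<Rightarrow> int" where
  "Ssum k v = (\<Sum>j<k. v j)"

lemma push_add: "dl_push f A n (a + b) v = dl_push f A (n + a) b (dl_push f A n a v)"
  by (induction b) (simp_all add: add.assoc)

lemma push_mid:
  assumes "a \<le> k" "k \<le> K"
  shows "dl_push f A a (K - a) v = dl_push f A k (K - k) (dl_push f A a (k - a) v)"
proof -
  have "K - a = (k - a) + (K - k)" using assms by simp
  then show ?thesis using push_add[of f A a "k - a" "K - k" v] assms by simp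
qed

lemma push_vec: "dl_vec (f n) v \<Longrightarrow> dl_vec (f (n + k)) (dl_push f A n k v)"
  by (induction k) (auto simp: dl_vec_def dl_step_def)

lemma push_nonneg: "\<forall>i. 0 \<le> v i \<Longrightarrow> \<forall>i. 0 \<le> dl_push f A n k v i"
  by (induction k) (auto simp: dl_step_def intro!: sum_nonneg)

lemma push_zero: "dl_push f A n k (\<lambda>i. 0) = (\<lambda>i. 0)"
  by (induction k) (auto simp: dl_step_def)

lemma Pr_add: "Pr f A n (a + b) = Pr f A n a * Pr f A (n + a) b"
  by (induction b) (simp_all add: Pr_def add.assoc)

lemma step_sum:
  assumes col: "\<forall>n. \<exists>c. \<forall>j<f n. (\<Sum>i<f (Suc n). A n i j) = c"
  shows "Ssum (f (Suc n)) (dl_step f A n v) = int (csum f A n) * Ssum (f n) v"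
proof (cases "f n = 0")
  case True
  then show ?thesis by (simp add: Ssum_def dl_step_def)
next
  case False
  obtain c where c: "\<forall>j<f n. (\<Sum>i<f (Suc n). A n i j) = c" using col by blast
  have cs: "\<And>j. j < f n \<Longrightarrow> (\<Sum>i<f (Suc n). A n i j) = csum f A n"
    using c False unfolding csum_def by auto
  have "Ssum (f (Suc n)) (dl_step f A n v) = (\<Sum>i<f (Suc n). \<Sum>j<f n. int (A n i j) * v j)"
    by (simp add: Ssum_def dl_step_def)
  also have "\<dots> = (\<Sum>j<f n. \<Sum>i<f (Suc n). int (A n i j) * v j)"
    by (rule sum.swap)
  also have "\<dots> = (\<Sum>j<f n. int (\<Sum>i<f (Suc n). A n i j) * v j)"
    by (simp add: sum_distrib_right)
  also have "\<dots> = (\<Sum>j<f n. int (csum f A n) * v j)"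
    using cs by simp
  also have "\<dots> = int (csum f A n) * Ssum (f n) v"
    by (simp add: Ssum_def sum_distrib_left)
  finally show ?thesis .
qed

lemma push_sum:
  assumes col: "\<forall>n. \<exists>c. \<forall>j<f n. (\<Sum>i<f (Suc n). A n i j) = c"
  shows "Ssum (f (n + k)) (dl_push f A n k v) = int (Pr f A n k) * Ssum (f n) v"
proof (induction k)
  case 0
  then show ?case by (simp add: Pr_def)
next
  case (Suc k)
  have "Ssum (f (n + Suc k)) (dl_push f A n (Suc k) v)
      = int (csum f A (n + k)) * Ssum (f (n + k)) (dl_push f A n k v)"
    using step_sum[OF col, of "n + k"] by simp
  then show ?case using Suc by (simp add: Pr_def)
qed

lemma rel_equiv: "equiv {(n, v). dl_vec (f n) v} (dl_rel f A)"
proof (rule equivI)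
  show "dl_rel f A \<subseteq> {(n, v). dl_vec (f n) v} \<times> {(n, v). dl_vec (f n) v}"
    by (auto simp: dl_rel_def)
  show "refl_on {(n, v). dl_vec (f n) v} (dl_rel f A)"
    by (auto simp: refl_on_def dl_rel_def)
  show "sym (dl_rel f A)"
    by (auto simp: sym_def dl_rel_def)
  show "trans (dl_rel f A)"
  proof (rule transI)
    fix x y z assume xy: "(x, y) \<in> dl_rel f A" and yz: "(y, z) \<in> dl_rel f A"
    obtain a v b w c u where eq: "x = (a, v)" "y = (b, w)" "z = (c, u)" by (metis prod.exhaust)
    from xy obtain k1 where k1: "a \<le> k1" "b \<le> k1" "dl_push f A a (k1 - a) v = dl_push f A b (k1 - b) w"
      and vv: "dl_vec (f a) v" "dl_vec (f b) w"
      by (auto simp: dl_rel_def eq)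
    from yz obtain k2 where k2: "b \<le> k2" "c \<le> k2" "dl_push f A b (k2 - b) w = dl_push f A c (k2 - c) u"
      and uu: "dl_vec (f c) u"
      by (auto simp: dl_rel_def eq)
    define k where "k = max k1 k2"
    have "dl_push f A a (k - a) v = dl_push f A k1 (k - k1) (dl_push f A a (k1 - a) v)"
      using push_mid[of a k1 k] k1 by (simp add: k_def)
    also have "\<dots> = dl_push f A b (k - b) w"
      using push_mid[of b k1 k] k1 by (simp add: k_def)
    also have "\<dots> = dl_push f A k2 (k - k2) (dl_push f A b (k2 - b) w)"
      using push_mid[of b k2 k] k2 by (simp add: k_def)
    also have "\<dots> = dl_push f A c (k - c) u"
      using push_mid[of c k2 k] k2 by (simp add: k_def)
    finally have "dl_push f A a (k - a) v = dl_push f A c (k - c) u" .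
    moreover have "a \<le> k" "c \<le> k" using k1 k2 by (auto simp: k_def)
    ultimately show "(x, z) \<in> dl_rel f A" using vv uu by (auto simp: dl_rel_def eq)
  qed
qed


locale DLctx =
  fixes f :: "nat \<Rightarrow> nat" and A :: "nat \<Rightarrow> nat \<Rightarrow> nat \<Rightarrow> nat" and N :: nat
  assumes col: "\<forall>n. \<exists>c. \<forall>j<f n. (\<Sum>i<f (Suc n). A n i j) = c"
    and good: "\<And>m. N \<le> m \<Longrightarrow> 0 < f m \<and> 0 < csum f A m"
    and pog: "is_pog (DL f A)"
begin

abbreviation "D \<equiv> {(n, v). dl_vec (f n) v}"
abbreviation "R \<equiv> dl_rel f A"
abbreviation "G \<equiv> DL f A"

definition Pp :: "nat \<Rightarrow> real" where
  "Pp a = real (Pr f A a (max a N - a)) / real (Pr f A N (max a N - N))"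

definition valp :: "nat \<times> (nat \<Rightarrow> int) \<Rightarrow> real" where
  "valp p = real_of_int (Ssum (f (fst p)) (snd p)) * Pp (fst p)"

definition sig :: "(nat \<times> (nat \<Rightarrow> int)) set \<Rightarrow> real" where
  "sig x = (if x \<in> pcar G then valp (SOME p. p \<in> x) else 0)"

lemma Pr_pos: "N \<le> m \<Longrightarrow> 0 < Pr f A m k"
  using good unfolding Pr_def by (auto intro!: prod_pos)

lemma Pp_eq:
  assumes "a \<le> K" "N \<le> K"
  shows "Pp a = real (Pr f A a (K - a)) / real (Pr f A N (K - N))"
proof -
  define M where "M = max a N"
  have M: "a \<le> M" "N \<le> M" "M \<le> K" using assms by (auto simp: M_def)
  have e1: "Pr f A a (K - a) = Pr f A a (M - a) * Pr f A M (K - M)"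
    using Pr_add[of f A a "M - a" "K - M"] M by simp
  have e2: "Pr f A N (K - N) = Pr f A N (M - N) * Pr f A M (K - M)"
    using Pr_add[of f A N "M - N" "K - M"] M by simp
  have pos: "0 < Pr f A M (K - M)" using Pr_pos M by simp
  show ?thesis unfolding Pp_def M_def[symmetric] e1 e2 using pos by simp
qed

lemma Pp_nonneg: "0 \<le> Pp a"
  by (simp add: Pp_def)

lemma Pp_N: "Pp N = 1"
  using Pr_pos[of N 0] by (simp add: Pp_def)

lemma val_at:
  assumes "a \<le> K" "N \<le> K"
  shows "valp (a, v) = real_of_int (Ssum (f K) (dl_push f A a (K - a) v)) / real (Pr f A N (K - N))"
proof -
  have "Ssum (f K) (dl_push f A a (K - a) v) = int (Pr f A a (K - a)) * Ssum (f a) v"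
    using push_sum[OF col, of a "K - a" v] assms by simp
  then show ?thesis using Pp_eq[OF assms] by (simp add: valp_def)
qed

lemma val_rel:
  assumes "((a, v), (b, w)) \<in> R"
  shows "valp (a, v) = valp (b, w)"
proof -
  from assms obtain k where k: "a \<le> k" "b \<le> k" "dl_push f A a (k - a) v = dl_push f A b (k - b) w"
    by (auto simp: dl_rel_def)
  define K where "K = max k N"
  have "dl_push f A a (K - a) v = dl_push f A k (K - k) (dl_push f A a (k - a) v)"
    using push_mid[of a k K] k by (simp add: K_def)
  also have "\<dots> = dl_push f A b (K - b) w"
    using push_mid[of b k K] k by (simp add: K_def)
  finally have e: "dl_push f A a (K - a) v = dl_push f A b (K - b) w" .
  have "a \<le> K" "b \<le> K" "N \<le> K" using k by (auto simp: K_def)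
  then show ?thesis using val_at e by simp
qed

lemma pog_add: "\<forall>a\<in>pcar G. \<forall>b\<in>pcar G. padd G a b \<in> pcar G"
  using pog unfolding is_pog_def by (elim conjE) assumption
lemma pog_zero: "pzero G \<in> pcar G"
  using pog unfolding is_pog_def by (elim conjE) assumption
lemma pog_neg: "\<forall>a\<in>pcar G. pneg G a \<in> pcar G"
  using pog unfolding is_pog_def by (elim conjE) assumption
lemma pog_pos_car: "ppos G \<subseteq> pcar G"
  using pog unfolding is_pog_def by (elim conjE) assumption

lemma car_eq: "pcar G = D // R"
  by (simp add: DL_def)

lemma sig_eq:
  assumes x: "x \<in> pcar G" and p: "p \<in> x"
  shows "sig x = valp p"
proof -
  have xq: "x \<in> D // R" using x car_eq by simp
  have ne: "\<exists>p. p \<in> x" using p by blast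
  have s: "(SOME p. p \<in> x) \<in> x" using someI_ex[OF ne] .
  have "((SOME p. p \<in> x), p) \<in> R"
    using in_quotient_imp_in_rel[OF rel_equiv xq] s p by blast
  then have "valp (SOME p. p \<in> x) = valp p"
    by (metis prod.exhaust val_rel)
  then show ?thesis using x by (simp add: sig_def)
qed

lemma mem_D:
  assumes "x \<in> pcar G" "(n, v) \<in> x"
  shows "dl_vec (f n) v"
proof -
  have "x \<in> D // R" using assms car_eq by simp
  then have "x \<subseteq> D" using rel_equiv by (metis Union_quotient Union_upper)
  then show ?thesis using assms by auto
qed

lemma push_mem:
  assumes x: "x \<in> pcar G" and p: "(n, v) \<in> x" and nk: "n \<le> k"
  shows "(k, dl_push f A n (k - n) v) \<in> x"
proof -
  have xq: "x \<in> D // R" using x car_eq by simp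
  have vv: "dl_vec (f n) v" using mem_D x p by simp
  have vk: "dl_vec (f k) (dl_push f A n (k - n) v)" using push_vec[where f=f and n=n and A=A and k="k - n", OF vv] nk by simp
  have r: "((n, v), (k, dl_push f A n (k - n) v)) \<in> R"
    using vv vk nk by (auto simp: dl_rel_def intro!: exI[of _ k])
  obtain q where q: "x = R `` {q}" "q \<in> D" using xq by (rule quotientE)
  have "(q, (n, v)) \<in> R" using p q by simp
  then have "(q, (k, dl_push f A n (k - n) v)) \<in> R"
    using r rel_equiv unfolding equiv_def trans_def by blast
  then show ?thesis using q by simp
qed

lemma car_ne:
  assumes "x \<in> pcar G" obtains n v where "(n, v) \<in> x"
proof -
  have "x \<noteq> {}" using in_quotient_imp_non_empty[OF rel_equiv[of f A], of x] assms car_eq by simp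
  then obtain p where "p \<in> x" by blast
  then show ?thesis using that by (cases p) blast
qed

lemma sig_add:
  assumes x: "x \<in> pcar G" and y: "y \<in> pcar G"
  shows "sig (padd G x y) = sig x + sig y"
proof -
  obtain n v where nv: "(n, v) \<in> x" using car_ne x by blast
  obtain m w where mw: "(m, w) \<in> y" using car_ne y by blast
  define k where "k = max n m"
  define v' where "v' = dl_push f A n (k - n) v"
  define w' where "w' = dl_push f A m (k - m) w"
  have xv: "(k, v') \<in> x" unfolding v'_def using push_mem[OF x nv] by (simp add: k_def)
  have yw: "(k, w') \<in> y" unfolding w'_def using push_mem[OF y mw] by (simp add: k_def)
  have d1: "dl_vec (f k) v'" using mem_D[OF x xv] .
  have d2: "dl_vec (f k) w'" using mem_D[OF y yw] .
  have dsum: "dl_vec (f k) (\<lambda>i. v' i + w' i)" using d1 d2 by (simp add: dl_vec_def)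
  have rr: "((k, \<lambda>i. v' i + w' i), (k, \<lambda>i. v' i + w' i)) \<in> R"
    using dsum by (auto simp: dl_rel_def intro!: exI[of _ k])
  have ins: "(k, \<lambda>i. v' i + w' i) \<in> {(n, \<lambda>i. v i + w i) | n v w. (n, v) \<in> x \<and> (n, w) \<in> y}"
    by (rule CollectI, rule exI[of _ k], rule exI[of _ v'], rule exI[of _ w']) (simp add: xv yw)
  have pe: "padd G x y = R `` {(n, \<lambda>i. v i + w i) | n v w. (n, v) \<in> x \<and> (n, w) \<in> y}"
    by (simp add: DL_def)
  have mem: "(k, \<lambda>i. v' i + w' i) \<in> padd G x y"
    unfolding pe using ImageI[OF rr ins] .
  have cl: "padd G x y \<in> pcar G" using pog_add x y by blast
  have "sig (padd G x y) = valp (k, \<lambda>i. v' i + w' i)" using sig_eq[OF cl mem] .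
  also have "\<dots> = valp (k, v') + valp (k, w')"
    by (simp add: valp_def Ssum_def sum.distrib algebra_simps)
  also have "\<dots> = sig x + sig y" using sig_eq[OF x xv] sig_eq[OF y yw] by simp
  finally show ?thesis .
qed

lemma sig_neg:
  assumes x: "x \<in> pcar G"
  shows "sig (pneg G x) = - sig x"
proof -
  obtain n v where nv: "(n, v) \<in> x" using car_ne x by blast
  have pe: "pneg G x = {(n, \<lambda>i. - v i) | n v. (n, v) \<in> x}" by (simp add: DL_def)
  have mem: "(n, \<lambda>i. - v i) \<in> pneg G x" unfolding pe using nv by (intro CollectI exI conjI) (rule refl, assumption)
  have cl: "pneg G x \<in> pcar G" using pog_neg x by blast
  have "sig (pneg G x) = valp (n, \<lambda>i. - v i)" using sig_eq[OF cl mem] .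
  also have "\<dots> = - valp (n, v)" by (simp add: valp_def Ssum_def sum_negf)
  finally show ?thesis using sig_eq[OF x nv] by simp
qed

lemma sig_zero: "sig (pzero G) = 0"
proof -
  have cl: "pzero G \<in> pcar G" using pog_zero by blast
  have pe: "pzero G = R `` {(0, \<lambda>i. 0)}" by (simp add: DL_def)
  have "((0::nat, \<lambda>i::nat. 0::int), (0::nat, \<lambda>i::nat. 0::int)) \<in> R" unfolding dl_rel_def dl_vec_def by auto
  then have "(0, \<lambda>i. 0) \<in> pzero G" unfolding pe Image_singleton_iff .
  from sig_eq[OF cl this] have "sig (pzero G) = valp (0, \<lambda>i. 0)" .
  also have "valp (0, \<lambda>i. 0) = 0" by (simp add: valp_def Ssum_def)
  finally show ?thesis .
qed

lemma sig_pos: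
  assumes "x \<in> ppos G" shows "0 \<le> sig x"
proof -
  have pe: "ppos G = {x \<in> D // R. \<exists>(n, v)\<in>x. \<forall>i. 0 \<le> v i}" by (simp add: DL_def)
  have h: "x \<in> D // R \<and> (\<exists>(n, v)\<in>x. \<forall>i. 0 \<le> v i)" using assms unfolding pe by (rule CollectD)
  have x: "x \<in> pcar G" using h car_eq by simp
  obtain p where p: "p \<in> x" "\<forall>i. 0 \<le> snd p i" using h by (auto simp: case_prod_beta)
  have "0 \<le> Ssum (f (fst p)) (snd p)" using p by (simp add: Ssum_def sum_nonneg)
  then have "0 \<le> valp p" using Pp_nonneg by (simp add: valp_def)
  then show ?thesis using sig_eq[OF x p(1)] by simp
qed

lemma sig_rat: "sig x \<in> \<rat>"
  unfolding sig_def valp_def Pp_def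
  by (auto intro!: Rats_mult Rats_divide Rats_of_int Rats_of_nat)

lemma zmul_nat:
  assumes u: "u \<in> pcar G"
  shows "(padd G u ^^ n) (pzero G) \<in> pcar G \<and> sig ((padd G u ^^ n) (pzero G)) = real n * sig u"
proof (induction n)
  case 0
  then show ?case using pog_zero sig_zero by simp
next
  case (Suc n)
  then show ?case using sig_add[OF u] pog_add u by (simp add: algebra_simps)
qed

lemma sig_unit_pos:
  assumes u: "order_unit G u"
  shows "0 < sig u"
proof -
  define e :: "nat \<Rightarrow> int" where "e = (\<lambda>i. if i = 0 then 1 else 0)"
  have fN: "0 < f N" using good by simp
  have de: "dl_vec (f N) e" using fN by (simp add: dl_vec_def e_def)
  define g0 where "g0 = R `` {(N, e)}"
  have g0c: "g0 \<in> pcar G" unfolding g0_def car_eq using de by (auto intro!: quotientI)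
  have g0m: "(N, e) \<in> g0" unfolding g0_def using de by (auto simp: dl_rel_def)
  have s1: "Ssum (f N) e = 1" using fN by (simp add: Ssum_def e_def)
  have sg0: "sig g0 = 1" using sig_eq[OF g0c g0m] s1 Pp_N by (simp add: valp_def)
  have up: "u \<in> ppos G" using u by (simp add: order_unit_def)
  have uc: "u \<in> pcar G" using up pog_pos_car by blast
  obtain n :: nat where le: "pog_le G g0 (pog_zmul G (int n) u)"
    using u g0c unfolding order_unit_def by blast
  have zm: "pog_zmul G (int n) u = (padd G u ^^ n) (pzero G)" by (simp add: pog_zmul_def)
  have zc: "(padd G u ^^ n) (pzero G) \<in> pcar G" and zs: "sig ((padd G u ^^ n) (pzero G)) = real n * sig u"
    using zmul_nat[OF uc] by auto
  have p: "padd G ((padd G u ^^ n) (pzero G)) (pneg G g0) \<in> ppos G"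
    using le zm by (simp add: pog_le_def)
  have nc: "pneg G g0 \<in> pcar G" using pog_neg g0c by blast
  have "0 \<le> sig (padd G ((padd G u ^^ n) (pzero G)) (pneg G g0))" using sig_pos[OF p] .
  also have "\<dots> = real n * sig u - 1" using sig_add[OF zc nc] sig_neg[OF g0c] zs sg0 by simp
  finally have "1 \<le> real n * sig u" by simp
  moreover have "0 \<le> sig u" using sig_pos[OF up] .
  ultimately show ?thesis by (cases "sig u = 0") auto
qed

lemma glob: "globally_irr_miscible G"
  unfolding globally_irr_miscible_def irr_miscible_def
proof (intro allI impI ballI)
  fix u g \<sigma> assume u: "order_unit G u" and g: "g \<in> Jset G u" and s: "\<sigma> \<in> states G u"
  have pos: "0 < sig u" using sig_unit_pos[OF u] .
  define \<tau> where "\<tau> = (\<lambda>x. sig x / sig u)"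
  have "\<tau> \<in> states G u"
    unfolding states_def \<tau>_def
  proof (intro CollectI conjI ballI allI impI)
    fix a b assume "a \<in> pcar G" "b \<in> pcar G"
    then show "sig (padd G a b) / sig u = sig a / sig u + sig b / sig u"
      using sig_add by (simp add: add_divide_distrib)
  next
    fix a assume "a \<in> ppos G" then show "0 \<le> sig a / sig u" using sig_pos pos by simp
  next
    show "sig u / sig u = 1" using pos by simp
  next
    fix a assume "a \<notin> pcar G" then show "sig a / sig u = 0" by (simp add: sig_def)
  qed
  then have "\<sigma> g = \<tau> g" using g s unfolding Jset_def by blast
  then show "\<sigma> g \<in> \<rat>" unfolding \<tau>_def using sig_rat by (simp add: Rats_divide)
qed

end

lemma zmul_car:
  assumes "is_pog G" "g \<in> pcar G"
  shows "pog_zmul G k g \<in> pcar G"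
proof -
  have a: "\<forall>a\<in>pcar G. \<forall>b\<in>pcar G. padd G a b \<in> pcar G"
    using assms(1) unfolding is_pog_def by (elim conjE) assumption
  have z: "pzero G \<in> pcar G" using assms(1) unfolding is_pog_def by (elim conjE) assumption
  have n: "\<forall>a\<in>pcar G. pneg G a \<in> pcar G" using assms(1) unfolding is_pog_def by (elim conjE) assumption
  have p: "(padd G g ^^ m) (pzero G) \<in> pcar G" for m
    by (induction m) (use a z assms(2) in auto)
  show ?thesis unfolding pog_zmul_def using p n by auto
qed

theorem mainTheorem14:
  fixes f :: "nat \<Rightarrow> nat" and A :: "nat \<Rightarrow> nat \<Rightarrow> nat \<Rightarrow> nat"
  assumes "\<forall>n. \<exists>c. \<forall>j<f n. (\<Sum>i<f (Suc n). A n i j) = c"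
    and "dimension_group (DL f A)"
    and "simple_pog (DL f A)"
    and "\<not> cyclic_pog (DL f A)"
  shows "globally_irr_miscible (DL f A)"
proof -
  note col = assms(1)
  have pog: "is_pog (DL f A)" using assms(2) unfolding dimension_group_def by blast
  have "\<exists>N. \<forall>m\<ge>N. 0 < f m \<and> 0 < csum f A m"
  proof (rule ccontr)
    assume nex: "\<not> (\<exists>N. \<forall>m\<ge>N. 0 < f m \<and> 0 < csum f A m)"
    have bad: "\<exists>m\<ge>N. f m = 0 \<or> csum f A m = 0" for N using nex by auto
    have kill: "((n, v), (0, \<lambda>i. 0)) \<in> dl_rel f A" if dv: "dl_vec (f n) v" for n v
    proof -
      obtain m where m: "n \<le> m" "f m = 0 \<or> csum f A m = 0" using bad by blast
      define w where "w = dl_push f A n (m - n) v"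
      have dw: "dl_vec (f m) w" using push_vec[where f=f and n=n and A=A and k="m - n", OF dv] m(1)
        by (simp add: w_def)
      have z: "dl_step f A m w = (\<lambda>i. 0)"
      proof (cases "f m = 0")
        case True
        then have "w = (\<lambda>i. 0)" using dw by (auto simp: dl_vec_def)
        then show ?thesis by (simp add: dl_step_def fun_eq_iff)
      next
        case False
        then have cs0: "csum f A m = 0" using m(2) by simp
        obtain c where c: "\<forall>j<f m. (\<Sum>i<f (Suc m). A m i j) = c" using col by blast
        have "c = 0" using c cs0 False unfolding csum_def by auto
        then have "A m i j = 0" if "i < f (Suc m)" "j < f m" for i j
          using c that by auto
        then show ?thesis by (auto simp: dl_step_def fun_eq_iff)
      qed
      have "dl_push f A n (Suc m - n) v = dl_step f A m w"
        using m(1) by (simp add: Suc_diff_le w_def)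
      then have e: "dl_push f A n (Suc m - n) v = dl_push f A 0 (Suc m - 0) (\<lambda>i. 0)"
        using z push_zero by simp
      show ?thesis using dv e m(1) unfolding dl_rel_def dl_vec_def
        by (auto intro!: exI[of _ "Suc m"])
    qed
    have zc: "pzero (DL f A) = dl_rel f A `` {(0, \<lambda>i. 0)}" by (simp add: DL_def)
    have sub: "pcar (DL f A) \<subseteq> {pzero (DL f A)}"
    proof
      fix x assume "x \<in> pcar (DL f A)"
      then have "x \<in> {(n, v). dl_vec (f n) v} // dl_rel f A" by (simp add: DL_def)
      then obtain q where q: "x = dl_rel f A `` {q}" "q \<in> {(n, v). dl_vec (f n) v}" by (rule quotientE)
      obtain n v where qq: "q = (n, v)" by (cases q)
      have "(q, (0, \<lambda>i. 0)) \<in> dl_rel f A" using kill q(2) qq by simp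
      then have "dl_rel f A `` {q} = dl_rel f A `` {(0, \<lambda>i. 0)}"
        by (rule equiv_class_eq[OF rel_equiv])
      then show "x \<in> {pzero (DL f A)}" using q zc by simp
    qed
    have z0: "pzero (DL f A) \<in> pcar (DL f A)" using pog unfolding is_pog_def by (elim conjE) assumption
    have "pcar (DL f A) = range (\<lambda>k. pog_zmul (DL f A) k (pzero (DL f A)))"
    proof
      show "pcar (DL f A) \<subseteq> range (\<lambda>k. pog_zmul (DL f A) k (pzero (DL f A)))"
      proof
        fix x assume "x \<in> pcar (DL f A)"
        then have "x = pzero (DL f A)" using sub by auto
        moreover have "pog_zmul (DL f A) 0 (pzero (DL f A)) = pzero (DL f A)" by (simp add: pog_zmul_def)
        ultimately show "x \<in> range (\<lambda>k. pog_zmul (DL f A) k (pzero (DL f A)))" by (metis rangeI)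
      qed
      show "range (\<lambda>k. pog_zmul (DL f A) k (pzero (DL f A))) \<subseteq> pcar (DL f A)"
        using zmul_car[OF pog z0] by auto
    qed
    then have "cyclic_pog (DL f A)" using z0 unfolding cyclic_pog_def by blast
    then show False using assms(4) by simp
  qed
  then obtain N where N: "\<forall>m\<ge>N. 0 < f m \<and> 0 < csum f A m" by blast
  interpret DLctx f A N
    using col N pog by unfold_locales auto
  show ?thesis using glob .
qed

end
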